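(* Let $G$ be a $k$-minor-critical graph. Then for every separation $(A,B)$ of $G$, the induced subgraph $G[A\cap B]$ is not a split graph; equivalently, $G[A\cap B]$ contains $C_4$, $C_5$ or $2K_2$ as an induced subgraph.
   Context: A graph $G$ is $k$-minor-critical if $\chi(G)=k$ and $\chi(H)<k$ for every minor $H$ of $G$ other than $G$ itself (a minor being obtained by edge deletions, edge contractions and vertex deletions). A separation of $G$ is a pair $(A,B)$ of subsets of $V(G)$ with $A\cup B=V(G)$, $A\setminus B\neq\emptyset$, $B\setminus A\neq\emptyset$, and no edge with one end in $A\setminus B$ and the other in $B\setminus A$. A split graph is a graph whose vertex set can be partitioned into a clique and an independent set (either possibly empty). *)

theory Defs
  imports Main
begin

type_synonym 'a graph = "'a set \<times> 'a set set"

definition verts :: "'a graph \<Rightarrow> 'a set" where "verts G = fst G"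
definition edges :: "'a graph \<Rightarrow> 'a set set" where "edges G = snd G"

definition finite_simple_graph :: "'a graph \<Rightarrow> bool" where
  "finite_simple_graph G \<longleftrightarrow> finite (verts G) \<and>
     (\<forall>e\<in>edges G. e \<subseteq> verts G \<and> card e = 2)"

definition colourable :: "'a graph \<Rightarrow> nat \<Rightarrow> bool" where
  "colourable G n \<longleftrightarrow> (\<exists>f :: 'a \<Rightarrow> nat.
      (\<forall>v\<in>verts G. f v < n) \<and> (\<forall>u v. {u, v} \<in> edges G \<longrightarrow> u \<noteq> v \<longrightarrow> f u \<noteq> f v))"

definition chromatic_number :: "'a graph \<Rightarrow> nat" where
  "chromatic_number G = (LEAST n. colourable G n)"

definition delete_edge :: "'a graph \<Rightarrow> 'a set \<Rightarrow> 'a graph" where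
  "delete_edge G e = (verts G, edges G - {e})"

definition delete_vertex :: "'a graph \<Rightarrow> 'a \<Rightarrow> 'a graph" where
  "delete_vertex G v = (verts G - {v}, {e \<in> edges G. v \<notin> e})"

definition contract_edge :: "'a graph \<Rightarrow> 'a \<Rightarrow> 'a \<Rightarrow> 'a graph" where
  "contract_edge G u v = (verts G - {v},
      {e \<in> edges G. v \<notin> e} \<union> {{u, w} | w. {v, w} \<in> edges G \<and> w \<noteq> u})"

definition minor_step :: "'a graph \<Rightarrow> 'a graph \<Rightarrow> bool" where
  "minor_step H G \<longleftrightarrow>
     (\<exists>e\<in>edges G. H = delete_edge G e) \<or>
     (\<exists>v\<in>verts G. H = delete_vertex G v) \<or>
     (\<exists>u v. {u, v} \<in> edges G \<and> u \<noteq> v \<and> H = contract_edge G u v)"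

text \<open>H is a proper minor of G: obtained by at least one minor operation.
  (For finite graphs every such H differs from G, and every minor of G other than G
  arises this way up to isomorphism.)\<close>

definition proper_minor :: "'a graph \<Rightarrow> 'a graph \<Rightarrow> bool" where
  "proper_minor H G \<longleftrightarrow> (\<lambda>X Y. minor_step Y X)\<^sup>+\<^sup>+ G H"

definition minor_critical :: "nat \<Rightarrow> 'a graph \<Rightarrow> bool" where
  "minor_critical k G \<longleftrightarrow> chromatic_number G = k \<and>
     (\<forall>H. proper_minor H G \<longrightarrow> chromatic_number H < k)"

definition separation :: "'a graph \<Rightarrow> 'a set \<Rightarrow> 'a set \<Rightarrow> bool" where
  "separation G A B \<longleftrightarrow> A \<union> B = verts G \<and> A - B \<noteq> {} \<and> B - A \<noteq> {} \<and>
     (\<forall>x y. x \<in> A - B \<longrightarrow> y \<in> B - A \<longrightarrow> {x, y} \<notin> edges G)"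

definition induced_subgraph :: "'a graph \<Rightarrow> 'a set \<Rightarrow> 'a graph" where
  "induced_subgraph G S = (S, {e \<in> edges G. e \<subseteq> S})"

definition split_graph :: "'a graph \<Rightarrow> bool" where
  "split_graph G \<longleftrightarrow> (\<exists>C I. C \<union> I = verts G \<and> C \<inter> I = {} \<and>
     (\<forall>u\<in>C. \<forall>v\<in>C. u \<noteq> v \<longrightarrow> {u, v} \<in> edges G) \<and>
     (\<forall>u\<in>I. \<forall>v\<in>I. {u, v} \<notin> edges G))"

end

theory Submission
  imports Defs
begin

definition cols :: "'a graph \<Rightarrow> 'a set \<Rightarrow> nat \<Rightarrow> ('a \<Rightarrow> nat) \<Rightarrow> bool" where
  "cols G W m g \<longleftrightarrow> (\<forall>v\<in>W. g v < m) \<and>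
     (\<forall>u v. {u,v} \<in> edges G \<longrightarrow> u \<in> W \<longrightarrow> v \<in> W \<longrightarrow> u \<noteq> v \<longrightarrow> g u \<noteq> g v)"

definition delset :: "'a graph \<Rightarrow> 'a set \<Rightarrow> 'a graph" where
  "delset G Z = (verts G - Z, {e\<in>edges G. e \<inter> Z = {}})"

definition contr :: "'a graph \<Rightarrow> 'a \<Rightarrow> 'a set \<Rightarrow> 'a graph" where
  "contr G t R = (verts G - R, {e\<in>edges G. e \<inter> R = {}} \<union>
      {{t,w}| w. w \<notin> R \<and> w \<noteq> t \<and> (\<exists>x\<in>R. {x,w} \<in> edges G)})"

definition stp :: "'a graph \<Rightarrow> 'a set \<Rightarrow> 'a \<Rightarrow> 'a \<Rightarrow> bool" where
  "stp G U a b \<longleftrightarrow> a \<in> U \<and> b \<in> U \<and> {a,b} \<in> edges G"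

lemma del_rt:
  assumes "finite Z" "Z \<subseteq> verts G"
  shows "(\<lambda>X Y. minor_step Y X)\<^sup>*\<^sup>* G (delset G Z)"
  using assms
proof (induction Z rule: finite_induct)
  case empty
  have "delset G {} = G" by (simp add: delset_def verts_def edges_def)
  then show ?case by simp
next
  case (insert x F)
  have "minor_step (delset G (insert x F)) (delset G F)"
    unfolding minor_step_def
  proof (rule disjI2, rule disjI1, rule bexI)
    show "delset G (insert x F) = delete_vertex (delset G F) x"
      by (auto simp: delset_def delete_vertex_def verts_def edges_def)
    show "x \<in> verts (delset G F)" using insert by (simp add: delset_def verts_def)
  qed
  moreover have "(\<lambda>X Y. minor_step Y X)\<^sup>*\<^sup>* G (delset G F)" using insert by simp
  ultimately show ?case by (simp add: rtranclp.rtrancl_into_rtrancl)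
qed

lemma contr_step:
  assumes nosing: "\<forall>x. {x} \<notin> edges G"
    and "v \<notin> R" "v \<noteq> t" "t \<notin> R"
    and adj: "{t,v} \<in> edges G \<or> (\<exists>x\<in>R. {x,v} \<in> edges G)"
  shows "minor_step (contr G t (insert v R)) (contr G t R)"
  unfolding minor_step_def
proof (intro disjI2 exI conjI)
  show "{t,v} \<in> edges (contr G t R)"
    using adj assms by (auto simp: contr_def edges_def)
  show "t \<noteq> v" using assms by auto
  show "contr G t (insert v R) = contract_edge (contr G t R) t v"
  proof -
    have "edges (contr G t (insert v R)) = edges (contract_edge (contr G t R) t v)"
    proof (rule set_eqI, rule iffI)
      fix e assume "e \<in> edges (contr G t (insert v R))"
      then show "e \<in> edges (contract_edge (contr G t R) t v)"
        using assms by (auto simp: contr_def contract_edge_def edges_def verts_def)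
    next
      fix e assume "e \<in> edges (contract_edge (contr G t R) t v)"
      then show "e \<in> edges (contr G t (insert v R))"
        using assms by (auto simp: contr_def contract_edge_def edges_def verts_def doubleton_eq_iff)
    qed
    moreover have "verts (contr G t (insert v R)) = verts (contract_edge (contr G t R) t v)"
      by (auto simp: contr_def contract_edge_def edges_def verts_def)
    ultimately show ?thesis by (metis prod.collapse verts_def edges_def)
  qed
qed

inductive grow :: "'a graph \<Rightarrow> 'a \<Rightarrow> 'a set \<Rightarrow> bool" for G t where
  grow0: "grow G t {}"
| growS: "grow G t R \<Longrightarrow> v \<notin> R \<Longrightarrow> v \<noteq> t \<Longrightarrow>
     ({t,v} \<in> edges G \<or> (\<exists>x\<in>R. {x,v} \<in> edges G)) \<Longrightarrow> grow G t (insert v R)"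

lemma grow_not_t: "grow G t R \<Longrightarrow> t \<notin> R"
  by (induction rule: grow.induct) auto

lemma grow_rt:
  assumes "grow G t R" and nosing: "\<forall>x. {x} \<notin> edges G"
  shows "(\<lambda>X Y. minor_step Y X)\<^sup>*\<^sup>* G (contr G t R)"
  using assms(1)
proof (induction rule: grow.induct)
  case grow0
  have "contr G t {} = G" by (simp add: contr_def verts_def edges_def)
  then show ?case by simp
next
  case (growS R v)
  have "t \<notin> R" using growS(1) by (rule grow_not_t)
  then have "minor_step (contr G t (insert v R)) (contr G t R)"
    using contr_step[OF nosing] growS by blast
  with growS show ?case by (meson rtranclp.rtrancl_into_rtrancl)
qed

lemma grow_full:
  assumes fin: "finite R" and tR: "t \<notin> R"
    and reach: "\<forall>x\<in>R. (stp G (insert t R))\<^sup>*\<^sup>* t x"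
  shows "grow G t R"
proof -
  define F where "F = {R'. R' \<subseteq> R \<and> grow G t R'}"
  have finF: "finite F" unfolding F_def using fin by simp
  have "{} \<in> F" unfolding F_def by (simp add: grow0)
  then have ne: "card ` F \<noteq> {}" by blast
  have "Max (card ` F) \<in> card ` F" using finF ne by simp
  then obtain R0 where R0F: "R0 \<in> F" and R0max: "card R0 = Max (card ` F)" by auto
  have maxp: "\<And>R'. R' \<in> F \<Longrightarrow> card R' \<le> card R0"
    using finF R0max by simp
  have R0sub: "R0 \<subseteq> R" and g0: "grow G t R0" using R0F unfolding F_def by auto
  have key: "x \<in> insert t R0" if "(stp G (insert t R))\<^sup>*\<^sup>* t x" for x
    using that
  proof (induction rule: rtranclp_induct)
    case base then show ?case by simp
  next
    case (step y z)
    show ?case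
    proof (rule ccontr)
      assume nz: "z \<notin> insert t R0"
      have zR: "z \<in> R" and e: "{y,z} \<in> edges G" and yin: "y \<in> insert t R0"
        using step nz by (auto simp: stp_def)
      have "grow G t (insert z R0)"
        apply (rule growS[OF g0]) using nz e yin by auto
      then have "insert z R0 \<in> F" unfolding F_def using zR R0sub by auto
      then have "card (insert z R0) \<le> card R0" by (rule maxp)
      moreover have "finite R0" using R0sub fin finite_subset by blast
      ultimately show False using nz by simp
    qed
  qed
  have "R \<subseteq> R0" using key reach tR by blast
  then have "R = R0" using R0sub by blast
  then show ?thesis using g0 by simp
qed

lemma stp_sym: "stp G U a b \<Longrightarrow> stp G U b a"
  by (simp add: stp_def insert_commute)

lemma stp_rev: "(stp G U)\<^sup>*\<^sup>* a b \<Longrightarrow> (stp G U)\<^sup>*\<^sup>* b a"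
proof (induction rule: rtranclp_induct)
  case base then show ?case by simp
next
  case (step y z)
  then show ?case by (meson converse_rtranclp_into_rtranclp stp_sym)
qed

lemma stp_mono: "(stp G U)\<^sup>*\<^sup>* a b \<Longrightarrow> U \<subseteq> U' \<Longrightarrow> (stp G U')\<^sup>*\<^sup>* a b"
proof (induction rule: rtranclp_induct)
  case base then show ?case by simp
next
  case (step y z)
  then have "stp G U' y z" by (auto simp: stp_def)
  with step show ?case by (meson rtranclp.rtrancl_into_rtrancl)
qed

lemma comp_inside:
  assumes "(stp G W)\<^sup>*\<^sup>* x0 x"
  shows "(stp G {z. (stp G W)\<^sup>*\<^sup>* x0 z})\<^sup>*\<^sup>* x0 x"
  using assms
proof (induction rule: rtranclp_induct)
  case base then show ?case by simp
next
  case (step y z)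
  then have "stp G {z. (stp G W)\<^sup>*\<^sup>* x0 z} y z"
    by (auto simp: stp_def intro: rtranclp.rtrancl_into_rtrancl)
  with step show ?case by (meson rtranclp.rtrancl_into_rtrancl)
qed

lemma comp_conn:
  assumes "x \<in> {z. (stp G W)\<^sup>*\<^sup>* x0 z}" "y \<in> {z. (stp G W)\<^sup>*\<^sup>* x0 z}"
  shows "(stp G {z. (stp G W)\<^sup>*\<^sup>* x0 z})\<^sup>*\<^sup>* x y"
  using assms comp_inside stp_rev by (metis mem_Collect_eq rtranclp_trans)

lemma comp_sub: "(stp G W)\<^sup>*\<^sup>* x0 x \<Longrightarrow> x0 \<in> W \<Longrightarrow> x \<in> W"
  by (induction rule: rtranclp_induct) (auto simp: stp_def)

lemma ex_colourable:
  assumes "finite U" "verts H \<subseteq> U" "\<forall>e\<in>edges H. e \<subseteq> U"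
  shows "\<exists>n. colourable H n"
proof -
  obtain f :: "'a \<Rightarrow> nat" and n where fi: "f ` U = {i. i < n}" "inj_on f U"
    using finite_imp_inj_to_nat_seg[OF assms(1)] by blast
  have "colourable H n" unfolding colourable_def
  proof (intro exI conjI allI impI ballI)
    fix v assume "v \<in> verts H" then show "f v < n" using fi assms by blast
  next
    fix u v assume "{u,v} \<in> edges H" "u \<noteq> v"
    then have "u \<in> U" "v \<in> U" using assms by auto
    then show "f u \<noteq> f v" using fi(2) \<open>u \<noteq> v\<close> by (meson inj_onD)
  qed
  then show ?thesis by blast
qed

lemma minor_colour:
  assumes crit: "\<forall>H. proper_minor H G \<longrightarrow> chromatic_number H < k"
    and pm: "proper_minor H G"
    and ex: "\<exists>n. colourable H n"
  shows "\<exists>f. (\<forall>v\<in>verts H. f v < k - 1) \<and> (\<forall>u v. {u,v} \<in> edges H \<longrightarrow> u \<noteq> v \<longrightarrow> f u \<noteq> f v)"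
proof -
  have lt: "chromatic_number H < k" using crit pm by blast
  have "colourable H (chromatic_number H)"
    unfolding chromatic_number_def using ex by (rule LeastI_ex)
  then obtain f where f: "\<forall>v\<in>verts H. f v < chromatic_number H"
     "\<forall>u v. {u,v} \<in> edges H \<longrightarrow> u \<noteq> v \<longrightarrow> f u \<noteq> f v"
    unfolding colourable_def by blast
  then show ?thesis using lt by (intro exI[of _ f]) auto
qed

lemma tr_of_rt:
  assumes "(\<lambda>X Y. minor_step Y X)\<^sup>*\<^sup>* G H" "H \<noteq> G"
  shows "proper_minor H G"
  using rtranclpD[OF assms(1)] assms(2) unfolding proper_minor_def by auto

lemma side_del:
  assumes fsg: "finite_simple_graph G"
    and crit: "\<forall>H. proper_minor H G \<longrightarrow> chromatic_number H < k"
    and Z: "Z \<noteq> {}" "Z \<subseteq> verts G" and WZ: "W \<inter> Z = {}" and WV: "W \<subseteq> verts G"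
  shows "\<exists>g. cols G W (k - 1) g"
proof -
  have finV: "finite (verts G)" and eV: "\<forall>e\<in>edges G. e \<subseteq> verts G"
    using fsg unfolding finite_simple_graph_def by auto
  have finZ: "finite Z" using Z finV finite_subset by blast
  have rt: "(\<lambda>X Y. minor_step Y X)\<^sup>*\<^sup>* G (delset G Z)" by (rule del_rt[OF finZ Z(2)])
  have "delset G Z \<noteq> G"
  proof
    assume "delset G Z = G"
    then have "verts (delset G Z) = verts G" by simp
    then show False using Z by (auto simp: delset_def verts_def)
  qed
  then have pm: "proper_minor (delset G Z) G" by (rule tr_of_rt[OF rt])
  have ex: "\<exists>n. colourable (delset G Z) n"
    by (rule ex_colourable[OF finV]) (use eV in \<open>auto simp: delset_def verts_def edges_def\<close>)
  obtain f where f: "\<forall>v\<in>verts (delset G Z). f v < k - 1"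
    "\<forall>u v. {u,v} \<in> edges (delset G Z) \<longrightarrow> u \<noteq> v \<longrightarrow> f u \<noteq> f v"
    using minor_colour[OF crit pm ex] by blast
  have "cols G W (k - 1) f" unfolding cols_def
  proof (intro conjI ballI allI impI)
    fix v assume "v \<in> W" then show "f v < k - 1" using f(1) WZ WV
      by (auto simp: delset_def verts_def)
  next
    fix u v assume "{u,v} \<in> edges G" "u \<in> W" "v \<in> W" "u \<noteq> v"
    then have "{u,v} \<in> edges (delset G Z)" using WZ by (auto simp: delset_def edges_def)
    then show "f u \<noteq> f v" using f(2) \<open>u \<noteq> v\<close> by blast
  qed
  then show ?thesis by blast
qed

lemma side_contr:
  assumes fsg: "finite_simple_graph G"
    and crit: "\<forall>H. proper_minor H G \<longrightarrow> chromatic_number H < k"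
    and Dx: "Dx \<subseteq> verts G" "Dx \<noteq> {}"
    and conn: "\<forall>x\<in>Dx. \<forall>y\<in>Dx. (stp G Dx)\<^sup>*\<^sup>* x y"
    and tI: "t \<in> I2" and DI: "Dx \<inter> I2 = {}" and DC: "Dx \<inter> C2 = {}" and CI: "C2 \<inter> I2 = {}"
    and Cn: "\<forall>c\<in>C2. \<exists>x\<in>Dx. {x,c} \<in> edges G"
    and In: "\<forall>i\<in>I2. \<exists>x\<in>Dx. {x,i} \<in> edges G"
    and Iind: "\<forall>i\<in>I2. \<forall>j\<in>I2. {i,j} \<notin> edges G"
    and W: "W \<subseteq> verts G" "W \<inter> Dx = {}" "I2 \<subseteq> W" "C2 \<subseteq> W"
  shows "\<exists>g. cols G W (k - 1) g \<and> (\<forall>i\<in>I2. \<forall>j\<in>I2. g i = g j) \<and> (\<forall>i\<in>I2. \<forall>c\<in>C2. g i \<noteq> g c)"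
proof -
  have finV: "finite (verts G)" and eV: "\<forall>e\<in>edges G. e \<subseteq> verts G"
    and c2: "\<forall>e\<in>edges G. card e = 2"
    using fsg unfolding finite_simple_graph_def by auto
  have nosing: "\<forall>x. {x} \<notin> edges G" using c2 by fastforce
  define R where "R = Dx \<union> (I2 - {t})"
  have tV: "t \<in> verts G" using tI W by blast
  have RV: "R \<subseteq> verts G" using Dx W unfolding R_def by blast
  have finR: "finite R" using RV finV finite_subset by blast
  have tR: "t \<notin> R" using tI DI unfolding R_def by blast
  obtain d0 where d0: "d0 \<in> Dx" "{d0,t} \<in> edges G" using In tI by blast
  have reachD: "(stp G (insert t R))\<^sup>*\<^sup>* t x" if "x \<in> Dx" for x
  proof -
    have "(stp G Dx)\<^sup>*\<^sup>* d0 x" using conn d0 that by blast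
    then have "(stp G (insert t R))\<^sup>*\<^sup>* d0 x" by (rule stp_mono) (auto simp: R_def)
    moreover have "stp G (insert t R) t d0" using d0 by (auto simp: stp_def R_def insert_commute)
    ultimately show ?thesis by (meson converse_rtranclp_into_rtranclp)
  qed
  have reach: "\<forall>x\<in>R. (stp G (insert t R))\<^sup>*\<^sup>* t x"
  proof
    fix x assume "x \<in> R"
    then consider "x \<in> Dx" | "x \<in> I2" "x \<noteq> t" unfolding R_def by blast
    then show "(stp G (insert t R))\<^sup>*\<^sup>* t x"
    proof cases
      case 1 then show ?thesis by (rule reachD)
    next
      case 2
      obtain d where d: "d \<in> Dx" "{d,x} \<in> edges G" using In 2 by blast
      have "stp G (insert t R) d x" using d 2 by (auto simp: stp_def R_def)
      then show ?thesis using reachD[OF d(1)] by (meson rtranclp.rtrancl_into_rtrancl)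
    qed
  qed
  have gr: "grow G t R" by (rule grow_full[OF finR tR reach])
  define H where "H = contr G t R"
  have rt: "(\<lambda>X Y. minor_step Y X)\<^sup>*\<^sup>* G H" unfolding H_def by (rule grow_rt[OF gr nosing])
  have "H \<noteq> G"
  proof
    assume "H = G"
    then have "verts H = verts G" by simp
    then show False using Dx unfolding H_def R_def by (auto simp: contr_def verts_def)
  qed
  then have pm: "proper_minor H G" by (rule tr_of_rt[OF rt])
  have ex: "\<exists>n. colourable H n"
  proof (rule ex_colourable[OF finV])
    show "verts H \<subseteq> verts G" by (auto simp: H_def contr_def verts_def)
    show "\<forall>e\<in>edges H. e \<subseteq> verts G"
      using eV tV by (auto simp: H_def contr_def edges_def)
  qed
  obtain f where f: "\<forall>v\<in>verts H. f v < k - 1"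
    "\<forall>u v. {u,v} \<in> edges H \<longrightarrow> u \<noteq> v \<longrightarrow> f u \<noteq> f v"
    using minor_colour[OF crit pm ex] by blast
  define g where "g v = (if v \<in> I2 then f t else f v)" for v
  have vH: "v \<in> verts H" if "v \<in> W" "v \<notin> I2" for v
    using that W unfolding H_def R_def by (auto simp: contr_def verts_def)
  have tH: "t \<in> verts H" using tV tR unfolding H_def by (auto simp: contr_def verts_def)
  have edge_t: "{t,v} \<in> edges H" if "u \<in> I2" "v \<in> W" "v \<notin> I2" "{u,v} \<in> edges G" for u v
  proof (cases "u = t")
    case True
    have "v \<notin> R" using that W unfolding R_def by blast
    then show ?thesis using that True tR unfolding H_def by (auto simp: contr_def edges_def)
  next
    case False
    then have uR: "u \<in> R" using that unfolding R_def by blast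
    have "v \<notin> R" "v \<noteq> t" using that W tI unfolding R_def by auto
    then show ?thesis using uR that unfolding H_def contr_def edges_def by auto
  qed
  have "cols G W (k - 1) g" unfolding cols_def
  proof (intro conjI ballI allI impI)
    fix v assume "v \<in> W" then show "g v < k - 1" using f(1) vH tH unfolding g_def by auto
  next
    fix u v assume uv: "{u,v} \<in> edges G" "u \<in> W" "v \<in> W" "u \<noteq> v"
    show "g u \<noteq> g v"
    proof (cases "u \<in> I2"; cases "v \<in> I2")
      assume "u \<in> I2" "v \<in> I2" then show ?thesis using Iind uv by blast
    next
      assume a: "u \<in> I2" "v \<notin> I2"
      then have "{t,v} \<in> edges H" using edge_t uv by blast
      moreover have "t \<noteq> v" using a tI by blast
      ultimately show ?thesis using f(2) a unfolding g_def by auto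
    next
      assume a: "u \<notin> I2" "v \<in> I2"
      have "{v,u} \<in> edges G" using uv by (simp add: insert_commute)
      then have "{t,u} \<in> edges H" using edge_t uv a by blast
      moreover have "t \<noteq> u" using a tI by blast
      ultimately show ?thesis using f(2) a unfolding g_def by metis
    next
      assume a: "u \<notin> I2" "v \<notin> I2"
      have "u \<notin> R" "v \<notin> R" using a uv W unfolding R_def by auto
      then have "{u,v} \<in> edges H" using uv unfolding H_def by (auto simp: contr_def edges_def)
      then show ?thesis using f(2) a uv unfolding g_def by auto
    qed
  qed
  moreover have "\<forall>i\<in>I2. \<forall>j\<in>I2. g i = g j" unfolding g_def by simp
  moreover have "\<forall>i\<in>I2. \<forall>c\<in>C2. g i \<noteq> g c"
  proof (intro ballI)
    fix i c assume ic: "i \<in> I2" "c \<in> C2"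
    obtain x where x: "x \<in> Dx" "{x,c} \<in> edges G" using Cn ic by blast
    have "c \<notin> R" "c \<noteq> t" using ic DC CI tI unfolding R_def by auto
    moreover have "x \<in> R" using x unfolding R_def by blast
    ultimately have "{t,c} \<in> edges H" using x unfolding H_def contr_def edges_def by auto
    moreover have "c \<notin> I2" using ic CI by blast
    ultimately show "g i \<noteq> g c" using f(2) ic \<open>c \<noteq> t\<close> unfolding g_def by auto
  qed
  ultimately show ?thesis by blast
qed

lemma glue:
  assumes cP: "cols G P m gP" and cQ: "cols G Q m gQ"
    and PQ: "P \<union> Q = verts G" and eV: "\<forall>e\<in>edges G. e \<subseteq> verts G"
    and sep: "\<forall>u v. u \<in> P - Q \<longrightarrow> v \<in> Q - P \<longrightarrow> {u,v} \<notin> edges G"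
    and pat: "\<forall>u\<in>P \<inter> Q. \<forall>v\<in>P \<inter> Q. (gP u = gP v \<longleftrightarrow> gQ u = gQ v)"
  shows "colourable G m"
proof -
  define S where "S = P \<inter> Q"
  define A where "A = gQ ` S"
  define B where "B = gP ` S"
  define \<psi> where "\<psi> c = gP (SOME s. s \<in> S \<and> gQ s = c)" for c
  have psi: "\<psi> (gQ s) = gP s" if "s \<in> S" for s
  proof -
    have "\<exists>s'. s' \<in> S \<and> gQ s' = gQ s" using that by blast
    then have "(SOME s'. s' \<in> S \<and> gQ s' = gQ s) \<in> S \<and> gQ (SOME s'. s' \<in> S \<and> gQ s' = gQ s) = gQ s"
      by (rule someI_ex)
    then show ?thesis unfolding \<psi>_def using pat that S_def by blast
  qed
  have Asub: "A \<subseteq> {..<m}" using cQ unfolding A_def S_def cols_def by auto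
  have Bsub: "B \<subseteq> {..<m}" using cP unfolding B_def S_def cols_def by auto
  have injpsi: "inj_on \<psi> A"
  proof
    fix a b assume "a \<in> A" "b \<in> A" "\<psi> a = \<psi> b"
    then obtain s s' where "s \<in> S" "s' \<in> S" "a = gQ s" "b = gQ s'" unfolding A_def by blast
    then show "a = b" using psi pat \<open>\<psi> a = \<psi> b\<close> unfolding S_def by auto
  qed
  have imgpsi: "\<psi> ` A = B" unfolding A_def B_def using psi by (auto simp: image_image)
  have finA: "finite A" and finB: "finite B" using Asub Bsub finite_subset by auto
  have "card A = card B" using injpsi imgpsi card_image by fastforce
  then have "card ({..<m} - A) = card ({..<m} - B)"
    using Asub Bsub finA finB by (simp add: card_Diff_subset)
  then obtain \<beta> where \<beta>: "bij_betw \<beta> ({..<m} - A) ({..<m} - B)"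
    using finite_same_card_bij by blast
  define \<phi> where "\<phi> x = (if x \<in> A then \<psi> x else \<beta> x)" for x
  have phi_range: "\<phi> x < m" if "x < m" for x
    using that \<beta> imgpsi Bsub unfolding \<phi>_def bij_betw_def by auto
  have phi_inj: "inj_on \<phi> {..<m}"
  proof
    fix x y assume xy: "x \<in> {..<m}" "y \<in> {..<m}" "\<phi> x = \<phi> y"
    show "x = y"
    proof (cases "x \<in> A"; cases "y \<in> A")
      assume "x \<in> A" "y \<in> A" then show ?thesis using xy injpsi unfolding \<phi>_def by (auto dest: inj_onD)
    next
      assume a: "x \<in> A" "y \<notin> A"
      then have "\<phi> x \<in> B" "\<phi> y \<notin> B" using imgpsi \<beta> xy unfolding \<phi>_def bij_betw_def by auto
      then show ?thesis using xy by simp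
    next
      assume a: "x \<notin> A" "y \<in> A"
      then have "\<phi> y \<in> B" "\<phi> x \<notin> B" using imgpsi \<beta> xy unfolding \<phi>_def bij_betw_def by auto
      then show ?thesis using xy by simp
    next
      assume "x \<notin> A" "y \<notin> A"
      then show ?thesis using xy \<beta> unfolding \<phi>_def bij_betw_def by (auto dest: inj_onD)
    qed
  qed
  define h where "h v = (if v \<in> P then gP v else \<phi> (gQ v))" for v
  have hQ: "h v = \<phi> (gQ v)" if "v \<in> Q" for v
  proof (cases "v \<in> P")
    case True
    then have "v \<in> S" using that S_def by blast
    then have "gQ v \<in> A" unfolding A_def by blast
    then show ?thesis using True psi[OF \<open>v \<in> S\<close>] unfolding h_def \<phi>_def by simp
  qed (simp add: h_def)
  show ?thesis unfolding colourable_def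
  proof (intro exI[of _ h] conjI allI impI ballI)
    fix v assume "v \<in> verts G"
    then show "h v < m" using cP cQ PQ phi_range unfolding h_def cols_def by auto
  next
    fix u v assume uv: "{u,v} \<in> edges G" "u \<noteq> v"
    then have uV: "u \<in> verts G" "v \<in> verts G" using eV by auto
    show "h u \<noteq> h v"
    proof (cases "u \<in> P \<and> v \<in> P")
      case True then show ?thesis using cP uv unfolding cols_def h_def by auto
    next
      case F1: False
      show ?thesis
      proof (cases "u \<in> Q \<and> v \<in> Q")
        case True
        then have "gQ u \<noteq> gQ v" "gQ u < m" "gQ v < m" using cQ uv unfolding cols_def by auto
        then show ?thesis using hQ True phi_inj by (auto dest: inj_onD)
      next
        case False
        with F1 uV PQ have "(u \<in> P - Q \<and> v \<in> Q - P) \<or> (v \<in> P - Q \<and> u \<in> Q - P)" by blast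
        then show ?thesis using sep uv by (metis insert_commute)
      qed
    qed
  qed
qed

theorem mainTheorem12:
  fixes G :: "'a graph" and k :: nat
  assumes "finite_simple_graph G"
    and "minor_critical k G"
    and "separation G A B"
  shows "\<not> split_graph (induced_subgraph G (A \<inter> B))"
proof
  assume spl: "split_graph (induced_subgraph G (A \<inter> B))"
  note fsg = assms(1)
  have chi: "chromatic_number G = k" and crit: "\<forall>H. proper_minor H G \<longrightarrow> chromatic_number H < k"
    using assms(2) unfolding minor_critical_def by auto
  have finV: "finite (verts G)" and eV: "\<forall>e\<in>edges G. e \<subseteq> verts G"
    and c2: "\<forall>e\<in>edges G. card e = 2"
    using fsg unfolding finite_simple_graph_def by auto
  have AB: "A \<union> B = verts G" and Xne: "A - B \<noteq> {}" and Yne: "B - A \<noteq> {}"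
    and noe: "\<forall>x y. x \<in> A - B \<longrightarrow> y \<in> B - A \<longrightarrow> {x, y} \<notin> edges G"
    using assms(3) unfolding separation_def by auto
  obtain C I where CI: "C \<union> I = A \<inter> B" "C \<inter> I = {}"
    and Ccl: "\<forall>u\<in>C. \<forall>v\<in>C. u \<noteq> v \<longrightarrow> {u, v} \<in> edges G"
    and Iind0: "\<forall>u\<in>I. \<forall>v\<in>I. {u, v} \<notin> edges (induced_subgraph G (A \<inter> B))"
    using spl unfolding split_graph_def by (auto simp: induced_subgraph_def verts_def edges_def)
  have Iind: "\<forall>u\<in>I. \<forall>v\<in>I. {u, v} \<notin> edges G"
    using Iind0 CI by (auto simp: induced_subgraph_def edges_def)
  obtain y0 where y0: "y0 \<in> B - A" using Yne by blast
  obtain x0 where x0: "x0 \<in> A - B" using Xne by blast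
  define Y where "Y = B - A"
  define D where "D = {z. (stp G Y)\<^sup>*\<^sup>* y0 z}"
  have y0D: "y0 \<in> D" unfolding D_def by simp
  have DY: "D \<subseteq> Y" using comp_sub[of G Y y0] y0 unfolding D_def Y_def by blast
  have Dcl: "w \<in> D" if "x \<in> D" "w \<in> Y" "{x,w} \<in> edges G" for x w
    using that DY unfolding D_def stp_def by (auto intro: rtranclp.rtrancl_into_rtrancl)
  define S1 where "S1 = {s. s \<notin> D \<and> (\<exists>x\<in>D. {x,s} \<in> edges G)}"
  have S1S: "S1 \<subseteq> A \<inter> B"
  proof
    fix s assume "s \<in> S1"
    then obtain x where x: "x \<in> D" "{x,s} \<in> edges G" "s \<notin> D" unfolding S1_def by blast
    have sV: "s \<in> verts G" using x eV by blast
    have "s \<notin> A - B"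
    proof
      assume "s \<in> A - B"
      moreover have "x \<in> B - A" using x DY Y_def by blast
      ultimately have "{s,x} \<notin> edges G" using noe by blast
      then show False using x by (simp add: insert_commute)
    qed
    moreover have "s \<notin> B - A" using Dcl x Y_def by blast
    ultimately show "s \<in> A \<inter> B" using sV AB by blast
  qed
  define W1 where "W1 = verts G - D - S1"
  have x0W1: "x0 \<in> W1" unfolding W1_def using x0 AB DY Y_def S1S by blast
  define D' where "D' = {z. (stp G W1)\<^sup>*\<^sup>* x0 z}"
  have x0D': "x0 \<in> D'" unfolding D'_def by simp
  have D'W1: "D' \<subseteq> W1" using comp_sub[of G W1 x0] x0W1 unfolding D'_def by blast
  have D'cl: "w \<in> D'" if "x \<in> D'" "w \<in> W1" "{x,w} \<in> edges G" for x w
    using that D'W1 unfolding D'_def stp_def by (auto intro: rtranclp.rtrancl_into_rtrancl)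
  define S2 where "S2 = {s. s \<notin> D' \<and> (\<exists>x\<in>D'. {x,s} \<in> edges G)}"
  have S2S1: "S2 \<subseteq> S1"
  proof
    fix s assume "s \<in> S2"
    then obtain x where x: "x \<in> D'" "{x,s} \<in> edges G" "s \<notin> D'" unfolding S2_def by blast
    have sV: "s \<in> verts G" using x eV by blast
    have "s \<notin> W1" using D'cl x by blast
    moreover have "s \<notin> D"
    proof
      assume sD: "s \<in> D"
      have "x \<notin> D" using x D'W1 W1_def by blast
      then have "x \<in> S1" unfolding S1_def using sD x by (auto simp: insert_commute)
      then show False using x D'W1 W1_def by blast
    qed
    ultimately show "s \<in> S1" using sV W1_def by blast
  qed
  define C2 where "C2 = C \<inter> S2"
  define I2 where "I2 = I \<inter> S2"
  define P where "P = verts G - D'"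
  define Q where "Q = D' \<union> S2"
  have S2V: "S2 \<subseteq> verts G" using S2S1 S1S AB by blast
  have D'V: "D' \<subseteq> verts G" using D'W1 W1_def by blast
  have DV: "D \<subseteq> verts G" using DY Y_def AB by blast
  have DD': "D \<inter> D' = {}" using D'W1 W1_def by blast
  have DS2: "D \<inter> S2 = {}" using S2S1 S1_def by blast
  have D'S2: "D' \<inter> S2 = {}" using S2_def by blast
  have S2CI: "S2 = C2 \<union> I2" using S2S1 S1S CI unfolding C2_def I2_def by blast
  have PQ: "P \<union> Q = verts G" using D'V S2V unfolding P_def Q_def by blast
  have PiQ: "P \<inter> Q = S2" using D'S2 S2V unfolding P_def Q_def by blast
  have sep: "\<forall>u v. u \<in> P - Q \<longrightarrow> v \<in> Q - P \<longrightarrow> {u,v} \<notin> edges G"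
  proof (intro allI impI)
    fix u v assume "u \<in> P - Q" "v \<in> Q - P"
    then have "v \<in> D'" "u \<notin> D'" "u \<notin> S2" using S2V unfolding P_def Q_def by auto
    then show "{u,v} \<notin> edges G" unfolding S2_def by (auto simp: insert_commute)
  qed
  have C2cl: "\<forall>u\<in>C2. \<forall>v\<in>C2. u \<noteq> v \<longrightarrow> {u, v} \<in> edges G" using Ccl C2_def by blast
  have I2ind: "\<forall>u\<in>I2. \<forall>v\<in>I2. {u, v} \<notin> edges G" using Iind I2_def by blast
  have C2I2: "C2 \<inter> I2 = {}" using CI C2_def I2_def by blast
  have Dconn: "\<forall>x\<in>D. \<forall>y\<in>D. (stp G D)\<^sup>*\<^sup>* x y" unfolding D_def by (intro ballI comp_conn)
  have D'conn: "\<forall>x\<in>D'. \<forall>y\<in>D'. (stp G D')\<^sup>*\<^sup>* x y" unfolding D'_def by (intro ballI comp_conn)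
  obtain gP gQ where gP: "cols G P (k - 1) gP" and gQ: "cols G Q (k - 1) gQ"
    and patP: "\<forall>i\<in>I2. \<forall>j\<in>I2. gP i = gP j" "\<forall>i\<in>I2. \<forall>c\<in>C2. gP i \<noteq> gP c"
    and patQ: "\<forall>i\<in>I2. \<forall>j\<in>I2. gQ i = gQ j" "\<forall>i\<in>I2. \<forall>c\<in>C2. gQ i \<noteq> gQ c"
  proof (cases "I2 = {}")
    case True
    have "\<exists>g. cols G P (k - 1) g"
      by (rule side_del[OF fsg crit, of D' P]) (use x0D' D'V in \<open>auto simp: P_def\<close>)
    then obtain gP where "cols G P (k - 1) gP" by blast
    moreover have "\<exists>g. cols G Q (k - 1) g"
      by (rule side_del[OF fsg crit, of D Q]) (use y0D DV DD' DS2 D'V S2V in \<open>auto simp: Q_def\<close>)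
    then obtain gQ where "cols G Q (k - 1) gQ" by blast
    ultimately show ?thesis using that True by blast
  next
    case False
    then obtain t where tI: "t \<in> I2" by blast
    have D'ne: "D' \<noteq> {}" using x0D' by blast
    have D'I: "D' \<inter> I2 = {}" "D' \<inter> C2 = {}" using D'S2 I2_def C2_def by auto
    have D'n: "\<forall>c\<in>C2. \<exists>x\<in>D'. {x, c} \<in> edges G" "\<forall>i\<in>I2. \<exists>x\<in>D'. {x, i} \<in> edges G"
      unfolding C2_def I2_def S2_def by blast+
    have PW: "P \<subseteq> verts G" "P \<inter> D' = {}" "I2 \<subseteq> P" "C2 \<subseteq> P"
      using S2V D'S2 unfolding P_def C2_def I2_def by auto
    have "\<exists>g. cols G P (k - 1) g \<and> (\<forall>i\<in>I2. \<forall>j\<in>I2. g i = g j) \<and> (\<forall>i\<in>I2. \<forall>c\<in>C2. g i \<noteq> g c)"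
      by (rule side_contr[OF fsg crit D'V D'ne D'conn tI D'I C2I2 D'n I2ind PW])
    then obtain gP where "cols G P (k - 1) gP \<and> (\<forall>i\<in>I2. \<forall>j\<in>I2. gP i = gP j) \<and> (\<forall>i\<in>I2. \<forall>c\<in>C2. gP i \<noteq> gP c)"
      by blast
    moreover
    have Dne: "D \<noteq> {}" using y0D by blast
    have DI: "D \<inter> I2 = {}" "D \<inter> C2 = {}" using DS2 I2_def C2_def by auto
    have Dn: "\<forall>c\<in>C2. \<exists>x\<in>D. {x, c} \<in> edges G" "\<forall>i\<in>I2. \<exists>x\<in>D. {x, i} \<in> edges G"
      using S2S1 unfolding C2_def I2_def S1_def by blast+
    have QW: "Q \<subseteq> verts G" "Q \<inter> D = {}" "I2 \<subseteq> Q" "C2 \<subseteq> Q"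
      using S2V D'V DD' DS2 unfolding Q_def C2_def I2_def by auto
    have "\<exists>g. cols G Q (k - 1) g \<and> (\<forall>i\<in>I2. \<forall>j\<in>I2. g i = g j) \<and> (\<forall>i\<in>I2. \<forall>c\<in>C2. g i \<noteq> g c)"
      by (rule side_contr[OF fsg crit DV Dne Dconn tI DI C2I2 Dn I2ind QW])
    then obtain gQ where "cols G Q (k - 1) gQ \<and> (\<forall>i\<in>I2. \<forall>j\<in>I2. gQ i = gQ j) \<and> (\<forall>i\<in>I2. \<forall>c\<in>C2. gQ i \<noteq> gQ c)"
      by blast
    ultimately show ?thesis using that by blast
  qed
  have eqv: "g u = g v \<longleftrightarrow> (u = v \<or> (u \<in> I2 \<and> v \<in> I2))"
    if "cols G W (k - 1) g" "S2 \<subseteq> W" "\<forall>i\<in>I2. \<forall>j\<in>I2. g i = g j" "\<forall>i\<in>I2. \<forall>c\<in>C2. g i \<noteq> g c"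
       "u \<in> S2" "v \<in> S2" for g W u v
  proof -
    have u2: "u \<in> C2 \<or> u \<in> I2" and v2: "v \<in> C2 \<or> v \<in> I2" using that(5,6) S2CI by auto
    have W: "u \<in> W" "v \<in> W" using that(2,5,6) by auto
    have pr: "\<And>a b. {a,b} \<in> edges G \<Longrightarrow> a \<in> W \<Longrightarrow> b \<in> W \<Longrightarrow> a \<noteq> b \<Longrightarrow> g a \<noteq> g b"
      using that(1) unfolding cols_def by blast
    show ?thesis
    proof (cases "u \<in> I2"; cases "v \<in> I2")
      assume "u \<in> I2" "v \<in> I2" then show ?thesis using that(3) by blast
    next
      assume a: "u \<in> I2" "v \<notin> I2"
      then have "v \<in> C2" using v2 by blast
      then show ?thesis using a that(4) by metis
    next
      assume a: "u \<notin> I2" "v \<in> I2"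
      then have "u \<in> C2" using u2 by blast
      then show ?thesis using a that(4) by metis
    next
      assume a: "u \<notin> I2" "v \<notin> I2"
      then have c: "u \<in> C2" "v \<in> C2" using u2 v2 by auto
      show ?thesis
      proof (cases "u = v")
        case False
        then have "{u,v} \<in> edges G" using C2cl c by blast
        then have "g u \<noteq> g v" using pr W False by blast
        then show ?thesis using a by blast
      qed simp
    qed
  qed
  have pat: "\<forall>u\<in>P \<inter> Q. \<forall>v\<in>P \<inter> Q. (gP u = gP v \<longleftrightarrow> gQ u = gQ v)"
  proof (intro ballI)
    fix u v assume "u \<in> P \<inter> Q" "v \<in> P \<inter> Q"
    then have uv: "u \<in> S2" "v \<in> S2" using PiQ by auto
    have sP: "S2 \<subseteq> P" and sQ: "S2 \<subseteq> Q" using PiQ by auto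
    show "gP u = gP v \<longleftrightarrow> gQ u = gQ v"
      using eqv[OF gP sP patP(1) patP(2) uv] eqv[OF gQ sQ patQ(1) patQ(2) uv] by simp
  qed
  have col: "colourable G (k - 1)" by (rule glue[OF gP gQ PQ eV sep pat])
  then have "chromatic_number G \<le> k - 1" unfolding chromatic_number_def by (rule Least_le)
  with chi have "k = 0" by simp
  with col have "colourable G 0" by simp
  moreover have "y0 \<in> verts G" using y0 AB by blast
  ultimately show False unfolding colourable_def by blast
qed

end
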